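(* Let $\alpha,\beta,\varepsilon>0$, $r\in\mathbb{N}$, $S\subseteq\mathbb{N}$ an infinite set, $\mathcal{A}=\mathcal{A}(n)$ and $X=X(n)$ graph properties (events in $G(n,p)$), and $p=p(n)$ with $p=\Theta(1/n)$, such that for every $n\in S$, $\Pr[X]>\beta$ and $\Pr[\mathcal{A}\mid X]>\alpha$ (probabilities in $G(n,p)$). For every integer $i\ge 0$ let $B_i$ be the event that the graph on $\{1,\dots,n\}$ satisfies: (1) there are exactly $i$ edges between $\{1,\dots,r\}$ and $\{r+1,\dots,n\}$; (2) there is no edge joining two vertices of $\{1,\dots,r\}$; (3) no vertex of $\{r+1,\dots,n\}$ has more than one neighbour in $\{1,\dots,r\}$. Then there exists $i\ge 0$ such that $\Pr[\mathcal{A}\mid B_i\cap X]>\alpha-\varepsilon$ for infinitely many $n\in S$.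
   Context: $G(n,p)$ denotes the random graph on vertex set $\{1,\dots,n\}$ in which each possible edge appears independently with probability $p=p(n)$. *)

theory Defs
  imports Complex_Main
begin

definition all_edges :: "nat \<Rightarrow> nat set set" where
  "all_edges n = {{u, v} | u v. u \<in> {1..n} \<and> v \<in> {1..n} \<and> u \<noteq> v}"

definition graphs :: "nat \<Rightarrow> nat set set set" where
  "graphs n = Pow (all_edges n)"

definition gnp_prob :: "nat \<Rightarrow> real \<Rightarrow> nat set set set \<Rightarrow> real" where
  "gnp_prob n p Ev = (\<Sum>E \<in> graphs n \<inter> Ev.
      p ^ card E * (1 - p) ^ (card (all_edges n) - card E))"

definition gnp_cond :: "nat \<Rightarrow> real \<Rightarrow> nat set set set \<Rightarrow> nat set set set \<Rightarrow> real" where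
  "gnp_cond n p Ev C = gnp_prob n p (Ev \<inter> C) / gnp_prob n p C"

definition B_event :: "nat \<Rightarrow> nat \<Rightarrow> nat \<Rightarrow> nat set set set" where
  "B_event n r i = {E \<in> graphs n.
      card {e \<in> E. \<exists>u v. e = {u, v} \<and> u \<in> {1..r} \<and> v \<in> {r+1..n}} = i
    \<and> (\<forall>u \<in> {1..r}. \<forall>v \<in> {1..r}. {u, v} \<notin> E)
    \<and> (\<forall>v \<in> {r+1..n}. card {u \<in> {1..r}. {u, v} \<in> E} \<le> 1)}"

end

theory Submission
  imports Defs "HOL-Library.Infinite_Set"
begin

lemma finite_all_edges: "finite (all_edges n)"
proof -
  have "all_edges n \<subseteq> Pow {1..n}" unfolding all_edges_def by auto
  thus ?thesis by (rule finite_subset) auto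
qed

lemma finite_graphs: "finite (graphs n)"
  unfolding graphs_def using finite_all_edges by simp

lemma sum_pow_one:
  fixes p :: real assumes "finite V"
  shows "(\<Sum>G\<in>Pow V. p ^ card G * (1 - p) ^ (card V - card G)) = 1"
proof -
  have "(\<Prod>x\<in>V. p + (1 - p)) = (\<Sum>X\<in>Pow V. (\<Prod>x\<in>X. p) * (\<Prod>x\<in>V-X. (1-p)))"
    by (rule prod_add[OF assms])
  also have "\<dots> = (\<Sum>G\<in>Pow V. p ^ card G * (1 - p) ^ (card V - card G))"
  proof (rule sum.cong)
    fix X assume "X \<in> Pow V"
    hence "X \<subseteq> V" by auto
    hence "card (V - X) = card V - card X" using assms by (simp add: card_Diff_subset finite_subset)
    thus "(\<Prod>x\<in>X. p) * (\<Prod>x\<in>V-X. (1-p)) = p ^ card X * (1 - p) ^ (card V - card X)" by simp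
  qed simp
  finally show ?thesis by simp
qed

lemma prob_superset:
  fixes p :: real assumes F: "F \<subseteq> all_edges n"
  shows "gnp_prob n p {E. F \<subseteq> E} = p ^ card F"
proof -
  define U where "U = all_edges n"
  have fU: "finite U" unfolding U_def by (rule finite_all_edges)
  have fF: "finite F" using F fU finite_subset unfolding U_def by blast
  have img: "graphs n \<inter> {E. F \<subseteq> E} = (\<lambda>G. F \<union> G) ` Pow (U - F)"
  proof
    show "graphs n \<inter> {E. F \<subseteq> E} \<subseteq> (\<lambda>G. F \<union> G) ` Pow (U - F)"
    proof
      fix E assume "E \<in> graphs n \<inter> {E. F \<subseteq> E}"
      hence "E = F \<union> (E - F)" "E - F \<in> Pow (U - F)" unfolding graphs_def U_def by auto
      thus "E \<in> (\<lambda>G. F \<union> G) ` Pow (U - F)" by blast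
    qed
    show "(\<lambda>G. F \<union> G) ` Pow (U - F) \<subseteq> graphs n \<inter> {E. F \<subseteq> E}"
      using F unfolding graphs_def U_def by auto
  qed
  have inj: "inj_on (\<lambda>G. F \<union> G) (Pow (U - F))"
    by (rule inj_onI) auto
  have "gnp_prob n p {E. F \<subseteq> E} = (\<Sum>G\<in>Pow (U - F). p ^ card (F \<union> G) * (1 - p) ^ (card U - card (F \<union> G)))"
    unfolding gnp_prob_def img U_def[symmetric] by (simp add: sum.reindex[OF inj])
  also have "\<dots> = (\<Sum>G\<in>Pow (U - F). p ^ card F * (p ^ card G * (1 - p) ^ (card (U - F) - card G)))"
  proof (rule sum.cong)
    fix G assume "G \<in> Pow (U - F)"
    hence G: "G \<subseteq> U - F" by auto
    have fG: "finite G" using G fU finite_subset by blast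
    have c1: "card (F \<union> G) = card F + card G" using G fF fG by (subst card_Un_disjoint) auto
    have c2: "card (U - F) = card U - card F" using F fU by (simp add: card_Diff_subset fF U_def)
    have "card F + card G \<le> card U"
      using c1 card_mono[OF fU, of "F \<union> G"] G F unfolding U_def by auto
    hence "card U - card (F \<union> G) = card (U - F) - card G" using c1 c2 by simp
    thus "p ^ card (F \<union> G) * (1 - p) ^ (card U - card (F \<union> G)) =
          p ^ card F * (p ^ card G * (1 - p) ^ (card (U - F) - card G))"
      using c1 by (simp add: power_add)
  qed simp
  also have "\<dots> = p ^ card F" using sum_pow_one[of "U - F" p] fU
    by (simp add: sum_distrib_left[symmetric])
  finally show ?thesis .
qed

lemma prob_nonneg: "0 \<le> (p::real) \<Longrightarrow> p \<le> 1 \<Longrightarrow> 0 \<le> gnp_prob n p Ev"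
  unfolding gnp_prob_def by (intro sum_nonneg) simp

lemma prob_mono: "0 \<le> (p::real) \<Longrightarrow> p \<le> 1 \<Longrightarrow> Ev \<subseteq> Ev' \<Longrightarrow> gnp_prob n p Ev \<le> gnp_prob n p Ev'"
  unfolding gnp_prob_def by (intro sum_mono2) (auto simp: finite_graphs)

lemma prob_split: "gnp_prob n p Ev = gnp_prob n p (Ev \<inter> C) + gnp_prob n p (Ev - C)"
proof -
  have e: "graphs n \<inter> Ev = (graphs n \<inter> (Ev \<inter> C)) \<union> (graphs n \<inter> (Ev - C))" by auto
  have "(\<Sum>E\<in>(graphs n \<inter> (Ev \<inter> C)) \<union> (graphs n \<inter> (Ev - C)). p ^ card E * (1 - p) ^ (card (all_edges n) - card E))
    = (\<Sum>E\<in>graphs n \<inter> (Ev \<inter> C). p ^ card E * (1 - p) ^ (card (all_edges n) - card E))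
     + (\<Sum>E\<in>graphs n \<inter> (Ev - C). p ^ card E * (1 - p) ^ (card (all_edges n) - card E))"
    by (rule sum.union_disjoint) (auto simp: finite_graphs)
  thus ?thesis unfolding gnp_prob_def e[symmetric] .
qed

lemma prob_un: assumes "0 \<le> (p::real)" "p \<le> 1"
  shows "gnp_prob n p (Ev1 \<union> Ev2) \<le> gnp_prob n p Ev1 + gnp_prob n p Ev2"
proof -
  have "gnp_prob n p (Ev1 \<union> Ev2) = gnp_prob n p Ev1 + gnp_prob n p (Ev2 - Ev1)"
    using prob_split[of n p "Ev1 \<union> Ev2" Ev1] by (simp add: Int_absorb2 Un_Diff)
  also have "\<dots> \<le> gnp_prob n p Ev1 + gnp_prob n p Ev2"
    using prob_mono[OF assms, of "Ev2 - Ev1" Ev2] by simp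
  finally show ?thesis .
qed

lemma prob_UN: assumes "0 \<le> (p::real)" "p \<le> 1" "finite I"
  shows "gnp_prob n p (\<Union>i\<in>I. Ev i) \<le> (\<Sum>i\<in>I. gnp_prob n p (Ev i))"
  using assms(3)
proof (induction I rule: finite_induct)
  case empty then show ?case by (simp add: gnp_prob_def)
next
  case (insert x F)
  have "gnp_prob n p (\<Union>i\<in>insert x F. Ev i) \<le> gnp_prob n p (Ev x) + gnp_prob n p (\<Union>i\<in>F. Ev i)"
    using prob_un[OF assms(1,2)] by simp
  with insert show ?case by simp
qed


lemma prob_superset_le:
  fixes p :: real assumes "0 \<le> p"
  shows "gnp_prob n p {E. F \<subseteq> E} \<le> p ^ card F"
proof (cases "F \<subseteq> all_edges n")
  case True then show ?thesis by (simp add: prob_superset)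
next
  case False
  hence "graphs n \<inter> {E. F \<subseteq> E} = {}" unfolding graphs_def by auto
  thus ?thesis using assms unfolding gnp_prob_def by simp
qed

definition Cr :: "nat \<Rightarrow> nat \<Rightarrow> nat set set" where
  "Cr n r = {e. \<exists>u v. e = {u, v} \<and> u \<in> {1..r} \<and> v \<in> {r+1..n}}"

definition G0 :: "nat \<Rightarrow> nat \<Rightarrow> nat set set set" where
  "G0 n r = {E \<in> graphs n. (\<forall>u \<in> {1..r}. \<forall>v \<in> {1..r}. {u, v} \<notin> E)
    \<and> (\<forall>v \<in> {r+1..n}. card {u \<in> {1..r}. {u, v} \<in> E} \<le> 1)}"

lemma B_alt: "B_event n r i = {E \<in> G0 n r. card (E \<inter> Cr n r) = i}"
proof -
  have "\<And>E. {e \<in> E. \<exists>u v. e = {u, v} \<and> u \<in> {1..r} \<and> v \<in> {r+1..n}} = E \<inter> Cr n r"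
    unfolding Cr_def by auto
  thus ?thesis unfolding B_event_def G0_def by auto
qed

lemma Cr_eq: "Cr n r = (\<lambda>(u,v). {u,v}) ` ({1..r} \<times> {r+1..n})"
  unfolding Cr_def by fastforce

lemma card_Cr: "card (Cr n r) \<le> r * n"
proof -
  have "card (Cr n r) \<le> card ({1..r} \<times> {r+1..n})" unfolding Cr_eq by (rule card_image_le) simp
  also have "\<dots> \<le> r * n" by (simp add: card_cartesian_product)
  finally show ?thesis .
qed

lemma finite_Cr: "finite (Cr n r)" unfolding Cr_eq by simp

lemma markov:
  fixes p :: real assumes p: "0 \<le> p" "p \<le> 1"
  shows "gnp_prob n p {E. card (E \<inter> Cr n r) > K} \<le> real r * real n * p / (real K + 1)"
proof -
  define w where "w E = p ^ card E * (1 - p) ^ (card (all_edges n) - card E)" for E :: "nat set set"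
  have w0: "0 \<le> w E" for E unfolding w_def using p by simp
  have "(real K + 1) * gnp_prob n p {E. card (E \<inter> Cr n r) > K}
     = (\<Sum>E\<in>graphs n \<inter> {E. card (E \<inter> Cr n r) > K}. w E * (real K + 1))"
    unfolding gnp_prob_def w_def by (simp add: sum_distrib_left mult.commute)
  also have "\<dots> \<le> (\<Sum>E\<in>graphs n \<inter> {E. card (E \<inter> Cr n r) > K}. w E * real (card (E \<inter> Cr n r)))"
    by (intro sum_mono mult_left_mono w0) auto
  also have "\<dots> \<le> (\<Sum>E\<in>graphs n. w E * real (card (E \<inter> Cr n r)))"
    by (intro sum_mono2 finite_graphs) (auto intro: w0 mult_nonneg_nonneg)
  also have "\<dots> = (\<Sum>E\<in>graphs n. \<Sum>e\<in>Cr n r. (if e \<in> E then w E else 0))"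
  proof (rule sum.cong)
    fix E
    have "real (card (E \<inter> Cr n r)) = (\<Sum>e\<in>Cr n r. if e \<in> E then 1 else 0)"
      using finite_Cr[of n r] by (simp add: sum.If_cases Int_commute Int_def)
    thus "w E * real (card (E \<inter> Cr n r)) = (\<Sum>e\<in>Cr n r. (if e \<in> E then w E else 0))"
      by (simp add: sum_distrib_left if_distrib cong: if_cong)
  qed simp
  also have "\<dots> = (\<Sum>e\<in>Cr n r. \<Sum>E\<in>graphs n. (if e \<in> E then w E else 0))"
    by (rule sum.swap)
  also have "\<dots> = (\<Sum>e\<in>Cr n r. gnp_prob n p {E. {e} \<subseteq> E})"
  proof (rule sum.cong)
    fix e
    show "(\<Sum>E\<in>graphs n. (if e \<in> E then w E else 0)) = gnp_prob n p {E. {e} \<subseteq> E}"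
      unfolding gnp_prob_def w_def using finite_graphs[of n]
      by (simp add: sum.inter_filter Int_def)
  qed simp
  also have "\<dots> \<le> (\<Sum>e\<in>Cr n r. p)"
    using prob_superset_le[OF p(1), of n "{_}"] by (intro sum_mono) simp
  also have "\<dots> = real (card (Cr n r)) * p" by simp
  also have "\<dots> \<le> real r * real n * p"
    using card_Cr[of n r] p by (intro mult_right_mono) (simp_all add: of_nat_mult[symmetric] del: of_nat_mult)
  finally have "(real K + 1) * gnp_prob n p {E. card (E \<inter> Cr n r) > K} \<le> real r * real n * p" .
  thus ?thesis by (simp add: field_simps)
qed


lemma notG0:
  fixes p :: real assumes p: "0 \<le> p" "p \<le> 1"
  shows "gnp_prob n p (graphs n - G0 n r) \<le> real r * real r * p + real r * real r * real n * p^2"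
proof -
  define I1 where "I1 = {1..r} \<times> {1..r}"
  define T where "T = {(u,w,v). u\<in>{1..r} \<and> w\<in>{1..r} \<and> u\<noteq>w \<and> v\<in>{r+1..n}}"
  define Ev1 where "Ev1 = (\<Union>x\<in>I1. {E. {{fst x, snd x}} \<subseteq> E})"
  define Ev2 where "Ev2 = (\<Union>x\<in>T. {E. {{fst x, snd (snd x)}, {fst (snd x), snd (snd x)}} \<subseteq> E})"
  have Tsub: "T \<subseteq> {1..r} \<times> {1..r} \<times> {r+1..n}" unfolding T_def by auto
  have fT: "finite T" using Tsub finite_subset by blast
  have cT: "card T \<le> r * r * n"
  proof -
    have "card T \<le> card ({1..r} \<times> {1..r} \<times> {r+1..n})" using Tsub by (intro card_mono) auto
    also have "\<dots> \<le> r * r * n" by (simp add: card_cartesian_product)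
    finally show ?thesis .
  qed
  have sub: "graphs n - G0 n r \<subseteq> Ev1 \<union> Ev2"
  proof
    fix E assume E: "E \<in> graphs n - G0 n r"
    show "E \<in> Ev1 \<union> Ev2"
    proof (cases "\<exists>u \<in> {1..r}. \<exists>v \<in> {1..r}. {u, v} \<in> E")
      case True
      then obtain u v where "u \<in> {1..r}" "v \<in> {1..r}" "{u,v} \<in> E" by blast
      hence "E \<in> Ev1" unfolding Ev1_def I1_def by force
      thus ?thesis by simp
    next
      case False
      with E obtain v where v: "v \<in> {r+1..n}" "\<not> card {u \<in> {1..r}. {u, v} \<in> E} \<le> 1"
        unfolding G0_def by auto
      have "finite {u \<in> {1..r}. {u, v} \<in> E}" by simp
      with v obtain u w where "u \<in> {1..r}" "{u,v} \<in> E" "w \<in> {1..r}" "{w,v} \<in> E" "u \<noteq> w"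
        using card_le_Suc0_iff_eq by (metis (no_types, lifting) One_nat_def mem_Collect_eq)
      hence "(u,w,v) \<in> T" "{{u,v},{w,v}} \<subseteq> E" using v unfolding T_def by auto
      hence "E \<in> Ev2" unfolding Ev2_def by force
      thus ?thesis by simp
    qed
  qed
  have "gnp_prob n p (graphs n - G0 n r) \<le> gnp_prob n p (Ev1 \<union> Ev2)"
    by (rule prob_mono[OF p sub])
  also have "\<dots> \<le> gnp_prob n p Ev1 + gnp_prob n p Ev2" by (rule prob_un[OF p])
  also have "gnp_prob n p Ev1 \<le> real r * real r * p"
  proof -
    have "gnp_prob n p Ev1 \<le> (\<Sum>x\<in>I1. gnp_prob n p {E. {{fst x, snd x}} \<subseteq> E})"
      unfolding Ev1_def by (rule prob_UN[OF p]) (simp add: I1_def)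
    also have "\<dots> \<le> (\<Sum>x\<in>I1. p)"
      using prob_superset_le[OF p(1), of n "{_}"] by (intro sum_mono) simp
    also have "\<dots> = real r * real r * p" by (simp add: I1_def card_cartesian_product)
    finally show ?thesis .
  qed
  also have "gnp_prob n p Ev2 \<le> real r * real r * real n * p^2"
  proof -
    have "gnp_prob n p Ev2 \<le> (\<Sum>x\<in>T. gnp_prob n p {E. {{fst x, snd (snd x)}, {fst (snd x), snd (snd x)}} \<subseteq> E})"
      unfolding Ev2_def by (rule prob_UN[OF p fT])
    also have "\<dots> \<le> (\<Sum>x\<in>T. p^2)"
    proof (rule sum_mono)
      fix x assume "x \<in> T"
      then obtain u w v where x: "x = (u,w,v)" "u \<noteq> w" unfolding T_def by auto
      have "card {{u,v},{w,v}} = 2" using x(2) by (auto simp: doubleton_eq_iff)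
      thus "gnp_prob n p {E. {{fst x, snd (snd x)}, {fst (snd x), snd (snd x)}} \<subseteq> E} \<le> p^2"
        using prob_superset_le[OF p(1), of n "{{u,v},{w,v}}"] x by simp
    qed
    also have "\<dots> = real (card T) * p^2" by simp
    also have "\<dots> \<le> real r * real r * real n * p^2"
      using cT by (intro mult_right_mono) (simp_all add: of_nat_mult[symmetric] del: of_nat_mult)
    finally show ?thesis .
  qed
  finally show ?thesis by simp
qed


lemma prob_restrict: "gnp_prob n p Ev = gnp_prob n p (graphs n \<inter> Ev)"
  unfolding gnp_prob_def by (simp add: Int_assoc[symmetric])

lemma prob_mono': "0 \<le> (p::real) \<Longrightarrow> p \<le> 1 \<Longrightarrow> graphs n \<inter> Ev \<subseteq> Ev' \<Longrightarrow> gnp_prob n p Ev \<le> gnp_prob n p Ev'"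
  by (metis prob_mono prob_restrict)

definition Good :: "nat \<Rightarrow> nat \<Rightarrow> nat \<Rightarrow> nat set set set" where
  "Good n r K = {E \<in> G0 n r. card (E \<inter> Cr n r) \<le> K}"

lemma decomp: "gnp_prob n p (C \<inter> Good n r K) = (\<Sum>i\<in>{..K}. gnp_prob n p (C \<inter> B_event n r i))"
proof -
  define h where "h E = p ^ card E * (1 - p) ^ (card (all_edges n) - card E)" for E :: "nat set set"
  define S where "S = graphs n \<inter> (C \<inter> Good n r K)"
  have fS: "finite S" unfolding S_def using finite_graphs by simp
  have im: "(\<lambda>E. card (E \<inter> Cr n r)) ` S \<subseteq> {..K}" unfolding S_def Good_def by auto
  have "(\<Sum>i\<in>{..K}. sum h {E. E \<in> S \<and> card (E \<inter> Cr n r) = i}) = sum h S"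
    by (rule sum.group[OF fS _ im]) simp
  moreover have "\<And>i. i \<in> {..K} \<Longrightarrow> {E. E \<in> S \<and> card (E \<inter> Cr n r) = i} = graphs n \<inter> (C \<inter> B_event n r i)"
    unfolding S_def Good_def B_alt G0_def by auto
  ultimately show ?thesis unfolding gnp_prob_def h_def[symmetric] S_def[symmetric]
    by (metis (no_types, lifting) sum.cong)
qed

lemma bad_bound:
  fixes p :: real assumes p: "0 \<le> p" "p \<le> 1"
  shows "gnp_prob n p (graphs n - Good n r K) \<le> real r * real r * p + real r * real r * real n * p^2
     + real r * real n * p / (real K + 1)"
proof -
  have "graphs n - Good n r K \<subseteq> (graphs n - G0 n r) \<union> {E. card (E \<inter> Cr n r) > K}"
    unfolding Good_def by auto
  hence "gnp_prob n p (graphs n - Good n r K) \<le> gnp_prob n p ((graphs n - G0 n r) \<union> {E. card (E \<inter> Cr n r) > K})"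
    by (rule prob_mono[OF p])
  also have "\<dots> \<le> gnp_prob n p (graphs n - G0 n r) + gnp_prob n p {E. card (E \<inter> Cr n r) > K}"
    by (rule prob_un[OF p])
  finally show ?thesis using notG0[OF p, of n r] markov[OF p, where n=n and r=r and K=K] by linarith
qed


theorem mainTheorem3:
  fixes \<alpha> \<beta> \<epsilon> :: real and r :: nat and S :: "nat set"
    and A X :: "nat \<Rightarrow> nat set set set" and p :: "nat \<Rightarrow> real"
  assumes "\<alpha> > 0" "\<beta> > 0" "\<epsilon> > 0"
    and "infinite S"
    and "\<And>n. 0 \<le> p n \<and> p n \<le> 1"
    and "\<exists>c1 c2. c1 > 0 \<and> c2 > 0 \<and>
           (\<forall>\<^sub>F n in sequentially. c1 / real n \<le> p n \<and> p n \<le> c2 / real n)"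
    and "\<And>n. n \<in> S \<Longrightarrow> gnp_prob n (p n) (X n) > \<beta>"
    and "\<And>n. n \<in> S \<Longrightarrow> gnp_cond n (p n) (A n) (X n) > \<alpha>"
  shows "\<exists>i::nat. infinite {n \<in> S.
            gnp_prob n (p n) (B_event n r i \<inter> X n) > 0 \<and>
            gnp_cond n (p n) (A n) (B_event n r i \<inter> X n) > \<alpha> - \<epsilon>}"
proof (rule ccontr)
  assume contra: "\<not> ?thesis"
  obtain c1 c2 where c2: "c2 > 0" and ev: "\<forall>\<^sub>F n in sequentially. c1 / real n \<le> p n \<and> p n \<le> c2 / real n"
    using assms(6) by blast
  then obtain N1 where N1: "\<And>n. n \<ge> N1 \<Longrightarrow> p n \<le> c2 / real n"
    unfolding eventually_sequentially by blast
  define \<delta> where "\<delta> = \<epsilon> * \<beta> / (1 + \<bar>\<alpha> - \<epsilon>\<bar>)"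
  have \<delta>: "\<delta> > 0" unfolding \<delta>_def using assms(2,3) by (simp add: add_pos_nonneg)
  obtain K :: nat where K: "2 * real r * c2 / \<delta> < real K + 1"
    using reals_Archimedean2[of "2 * real r * c2 / \<delta>"] by (metis add.commute add_strict_increasing zero_less_one less_imp_le)
  obtain N0 :: nat where N0: "2 * (real r * real r * c2 + real r * real r * c2 * c2) / \<delta> < real N0"
    using reals_Archimedean2 by blast
  define M where "M = (\<Union>i\<in>{..K}. {n \<in> S.
            gnp_prob n (p n) (B_event n r i \<inter> X n) > 0 \<and>
            gnp_cond n (p n) (A n) (B_event n r i \<inter> X n) > \<alpha> - \<epsilon>})"
  have fM: "finite M" unfolding M_def using contra by auto
  have "infinite (S - M)" using assms(4) fM by simp
  then obtain n where n: "n \<ge> N0 + N1 + 1" "n \<in> S" "n \<notin> M"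
    unfolding infinite_nat_iff_unbounded_le by blast
  define q where "q = p n"
  have q: "0 \<le> q" "q \<le> 1" unfolding q_def using assms(5) by auto
  have qn: "q \<le> c2 / real n" unfolding q_def using N1 n(1) by simp
  have npos: "real n > 0" using n(1) by simp
  have nq: "real n * q \<le> c2" using qn npos by (simp add: field_simps)
  define P where "P = gnp_prob n q"
  have P0: "\<And>Ev. 0 \<le> P Ev" unfolding P_def using prob_nonneg[OF q] by blast
  define Bad where "Bad = P (graphs n - Good n r K)"
  have Bad_le: "Bad \<le> real r * real r * q + real r * real r * real n * q^2 + real r * real n * q / (real K + 1)"
    unfolding Bad_def P_def by (rule bad_bound[OF q])
  have t1: "real r * real r * q \<le> real r * real r * c2 / real n"
  proof -
    have "real r * real r * q \<le> real r * real r * (c2 / real n)" using qn by (intro mult_left_mono) auto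
    thus ?thesis by simp
  qed
  have t2: "real r * real r * real n * q^2 \<le> real r * real r * c2 * c2 / real n"
  proof -
    have "real r * real r * real n * q^2 = real r * real r * (real n * q) * q" by (simp add: power2_eq_square)
    also have "\<dots> \<le> real r * real r * c2 * q" using nq q by (intro mult_right_mono mult_left_mono) auto
    also have "\<dots> \<le> real r * real r * c2 * (c2 / real n)" using qn c2 by (intro mult_left_mono) auto
    finally show ?thesis by simp
  qed
  have t3: "real r * real n * q / (real K + 1) \<le> real r * c2 / (real K + 1)"
    using nq by (intro divide_right_mono) (auto simp: mult.assoc intro: mult_left_mono)
  have s12: "(real r * real r * c2 + real r * real r * c2 * c2) / real n < \<delta> / 2"
  proof -
    have "real N0 \<le> real n" using n(1) by simp
    hence "2 * (real r * real r * c2 + real r * real r * c2 * c2) / \<delta> < real n" using N0 by linarith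
    thus ?thesis using \<delta> npos by (simp add: field_simps)
  qed
  have s3: "real r * c2 / (real K + 1) < \<delta> / 2"
    using K \<delta> by (simp add: field_simps)
  have Bad_lt: "Bad < \<delta>"
  proof -
    have "Bad \<le> (real r * real r * c2 + real r * real r * c2 * c2) / real n + real r * c2 / (real K + 1)"
      using Bad_le t1 t2 t3 by (simp add: add_divide_distrib)
    thus ?thesis using s12 s3 by linarith
  qed
  define PX where "PX = P (X n)"
  define PAX where "PAX = P (A n \<inter> X n)"
  have PX: "PX > \<beta>" unfolding PX_def P_def q_def using assms(7) n(2) by simp
  have "gnp_cond n q (A n) (X n) > \<alpha>" unfolding q_def using assms(8) n(2) by simp
  hence "PAX / PX > \<alpha>" unfolding gnp_cond_def PAX_def PX_def P_def .
  hence PAX: "PAX > \<alpha> * PX" using PX assms(2) by (simp add: field_simps)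
  have each: "P (A n \<inter> X n \<inter> B_event n r i) \<le> (\<alpha> - \<epsilon>) * P (X n \<inter> B_event n r i)" if i: "i \<le> K" for i
  proof -
    have eqA: "A n \<inter> X n \<inter> B_event n r i = A n \<inter> (B_event n r i \<inter> X n)" by auto
    have eqX: "X n \<inter> B_event n r i = B_event n r i \<inter> X n" by auto
    have notin: "\<not> (P (B_event n r i \<inter> X n) > 0 \<and> gnp_cond n q (A n) (B_event n r i \<inter> X n) > \<alpha> - \<epsilon>)"
      using n(2,3) i unfolding M_def P_def q_def by auto
    have mono: "P (A n \<inter> (B_event n r i \<inter> X n)) \<le> P (B_event n r i \<inter> X n)"
      unfolding P_def by (rule prob_mono[OF q]) auto
    show ?thesis
    proof (cases "P (B_event n r i \<inter> X n) > 0")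
      case True
      with notin have "P (A n \<inter> (B_event n r i \<inter> X n)) / P (B_event n r i \<inter> X n) \<le> \<alpha> - \<epsilon>"
        unfolding gnp_cond_def P_def by simp
      thus ?thesis using True unfolding eqA eqX by (simp add: divide_le_eq mult.commute)
    next
      case False
      hence "P (B_event n r i \<inter> X n) = 0" using P0[of "B_event n r i \<inter> X n"] by simp
      thus ?thesis using mono P0[of "A n \<inter> (B_event n r i \<inter> X n)"] unfolding eqA eqX by simp
    qed
  qed
  have split1: "PAX = P (A n \<inter> X n \<inter> Good n r K) + P (A n \<inter> X n - Good n r K)"
    unfolding PAX_def P_def by (rule prob_split)
  have split2: "PX = P (X n \<inter> Good n r K) + P (X n - Good n r K)"
    unfolding PX_def P_def by (rule prob_split)
  have d1: "P (A n \<inter> X n \<inter> Good n r K) = (\<Sum>i\<in>{..K}. P (A n \<inter> X n \<inter> B_event n r i))"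
    unfolding P_def by (rule decomp)
  have d2: "P (X n \<inter> Good n r K) = (\<Sum>i\<in>{..K}. P (X n \<inter> B_event n r i))"
    unfolding P_def by (rule decomp)
  have g1: "P (A n \<inter> X n \<inter> Good n r K) \<le> (\<alpha> - \<epsilon>) * P (X n \<inter> Good n r K)"
    unfolding d1 d2 sum_distrib_left by (intro sum_mono each) simp
  have b1: "P (A n \<inter> X n - Good n r K) \<le> Bad" unfolding Bad_def P_def
    by (rule prob_mono'[OF q]) auto
  have b2: "P (X n - Good n r K) \<le> Bad" unfolding Bad_def P_def
    by (rule prob_mono'[OF q]) auto
  have b2': "0 \<le> P (X n - Good n r K)" by (rule P0)
  have "(\<alpha> - \<epsilon>) * P (X n \<inter> Good n r K) \<le> (\<alpha> - \<epsilon>) * PX + \<bar>\<alpha> - \<epsilon>\<bar> * Bad"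
  proof -
    have "(\<alpha> - \<epsilon>) * P (X n \<inter> Good n r K) = (\<alpha> - \<epsilon>) * PX - (\<alpha> - \<epsilon>) * P (X n - Good n r K)"
      using split2 by (simp add: algebra_simps)
    also have "- (\<alpha> - \<epsilon>) * P (X n - Good n r K) \<le> \<bar>\<alpha> - \<epsilon>\<bar> * P (X n - Good n r K)"
      using b2' by (intro mult_right_mono) auto
    hence "(\<alpha> - \<epsilon>) * PX - (\<alpha> - \<epsilon>) * P (X n - Good n r K) \<le> (\<alpha> - \<epsilon>) * PX + \<bar>\<alpha> - \<epsilon>\<bar> * P (X n - Good n r K)"
      by (simp add: algebra_simps)
    also have "\<bar>\<alpha> - \<epsilon>\<bar> * P (X n - Good n r K) \<le> \<bar>\<alpha> - \<epsilon>\<bar> * Bad"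
      using b2 by (intro mult_left_mono) auto
    finally show ?thesis by simp
  qed
  hence "\<alpha> * PX < (\<alpha> - \<epsilon>) * PX + (1 + \<bar>\<alpha> - \<epsilon>\<bar>) * Bad"
    using PAX split1 g1 b1 by (simp add: algebra_simps)
  hence "\<epsilon> * PX < (1 + \<bar>\<alpha> - \<epsilon>\<bar>) * Bad" by (simp add: algebra_simps)
  also have "\<dots> < (1 + \<bar>\<alpha> - \<epsilon>\<bar>) * \<delta>"
    using Bad_lt by (intro mult_strict_left_mono) (auto simp: add_pos_nonneg)
  also have "\<dots> = \<epsilon> * \<beta>" unfolding \<delta>_def by (simp add: add_pos_nonneg)
  finally have "\<epsilon> * PX < \<epsilon> * \<beta>" .
  thus False using PX assms(3) by (simp add: mult_less_cancel_left)
qed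

end
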